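(* Let $\emptyset \neq \mathcal O \subseteq \{\cup,\cap,\overline{\phantom{c}},+,/\}$ and let $C$ be an $\mathcal O$-circuit. Then for every natural number $z \ge 2^{|C|}+1$ we have $z\in I(C)$ if and only if $2^{|C|}+1 \in I(C)$.
   Context: Natural numbers include $0$. For $A,B\subseteq\mathbb N$: $A\cup B$, $A\cap B$ are the usual operations, $\overline{A}=\mathbb N\setminus A$, $A+B=\{a+b: a\in A, b\in B\}$, $A\times B=\{a\cdot b: a\in A, b\in B\}$, and $A/B=\{c\in\mathbb N:\exists a\in A\ \exists b\in B\setminus\{0\}: a=c\cdot b\}$ (exact integer division without remainder or rounding). For $\emptyset\ne\mathcal O\subseteq\{\cup,\cap,\overline{\phantom{c}},+,\times,/\}$, an $\mathcal O$-circuit $C=(V,E,g_C,\alpha)$ is a finite acyclic directed multigraph with gate set $V\subseteq\mathbb N$, every gate having indegree $0$, $1$ or $2$, a designated output gate $g_C\in V$, and a labeling $\alpha$: gates of indegree $0$ (input gates) are labeled by natural numbers, gates of indegree $1$ are labeled $\overline{\phantom{c}}$ (allowed only if $\overline{\phantom{c}}\in\mathcal O$), and gates of indegree $2$ are labeled by an operation in $\mathcal O\setminus\{\overline{\phantom{c}}\}$. The result set $I(g)\subseteq\mathbb N$ is defined inductively: $I(g)=\{\alpha(g)\}$ for an input gate; $I(g)=\mathbb N\setminus I(p)$ for a complement gate with predecessor $p$; $I(g)=I(g_1)\,\sigma\,I(g_2)$ for a gate labeled $\sigma$ with predecessors $g_1\le g_2$ (a double edge from one gate gives $g_1=g_2$).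 $I(C)=I(g_C)$. A circuit is encoded as a bit string listing its gates in reverse topological order, each gate as the triple (gate name, label, list of predecessors), with all numbers (including input labels) in binary; $|C|$ denotes the length of this encoding. *)

theory Defs
  imports Main
begin

datatype setop = OUn | OInt | OCompl | OPlus | OTimes | ODiv

definition set_plus_nat :: "nat set \<Rightarrow> nat set \<Rightarrow> nat set" where
  "set_plus_nat A B = {a + b | a b. a \<in> A \<and> b \<in> B}"

definition set_times_nat :: "nat set \<Rightarrow> nat set \<Rightarrow> nat set" where
  "set_times_nat A B = {a * b | a b. a \<in> A \<and> b \<in> B}"

definition set_div_nat :: "nat set \<Rightarrow> nat set \<Rightarrow> nat set" where
  "set_div_nat A B = {c. \<exists>a\<in>A. \<exists>b\<in>B - {0}. a = c * b}"

fun apply_binop :: "setop \<Rightarrow> nat set \<Rightarrow> nat set \<Rightarrow> nat set" where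
  "apply_binop OUn A B = A \<union> B"
| "apply_binop OInt A B = A \<inter> B"
| "apply_binop OPlus A B = set_plus_nat A B"
| "apply_binop OTimes A B = set_times_nat A B"
| "apply_binop ODiv A B = set_div_nat A B"
| "apply_binop OCompl A B = UNIV - A"  (* never used for binary gates *)

datatype glabel = Inp nat | Gop setop

record circuit =
  gates :: "nat set"
  preds :: "nat \<Rightarrow> nat list"   \<comment> \<open>predecessors as a list (multigraph: repetitions allowed)\<close>
  lab   :: "nat \<Rightarrow> glabel"
  outg  :: nat

definition edge_rel :: "circuit \<Rightarrow> (nat \<times> nat) set" where
  "edge_rel C = {(p, g). g \<in> gates C \<and> p \<in> set (preds C g)}"

definition is_circuit :: "setop set \<Rightarrow> circuit \<Rightarrow> bool" where
  "is_circuit Ops C \<longleftrightarrow>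
     finite (gates C) \<and> outg C \<in> gates C \<and> acyclic (edge_rel C) \<and>
     (\<forall>g \<in> gates C.
        set (preds C g) \<subseteq> gates C \<and>
        (case lab C g of
           Inp n \<Rightarrow> preds C g = []
         | Gop \<sigma> \<Rightarrow> \<sigma> \<in> Ops \<and>
              (if \<sigma> = OCompl then length (preds C g) = 1 else length (preds C g) = 2)))"

definition eval_step :: "circuit \<Rightarrow> (nat \<Rightarrow> nat set) \<Rightarrow> nat \<Rightarrow> nat set" where
  "eval_step C f g =
     (case lab C g of
        Inp n \<Rightarrow> {n}
      | Gop \<sigma> \<Rightarrow>
          (if \<sigma> = OCompl then UNIV - f (hd (preds C g))
           else (let ps = preds C g; g1 = min (ps ! 0) (ps ! 1); g2 = max (ps ! 0) (ps ! 1)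
                 in apply_binop \<sigma> (f g1) (f g2))))"

text \<open>Iterating the step card(gates) times yields the correct value at every gate
  of an acyclic circuit (each gate has depth < card gates).\<close>
definition gate_val :: "circuit \<Rightarrow> nat \<Rightarrow> nat set" where
  "gate_val C = (eval_step C ^^ card (gates C)) (\<lambda>_. {})"

definition circuit_val :: "circuit \<Rightarrow> nat set" where
  "circuit_val C = gate_val C (outg C)"

datatype esym = S0 | S1 | SOpen | SClose | SComma | SUn | SInt | SCompl | SPlus | STimes | SDiv

fun bin :: "nat \<Rightarrow> esym list" where
  "bin n = (if n < 2 then [if n = 0 then S0 else S1]
            else bin (n div 2) @ [if n mod 2 = 0 then S0 else S1])"

fun op_sym :: "setop \<Rightarrow> esym" where
  "op_sym OUn = SUn" | "op_sym OInt = SInt" | "op_sym OCompl = SCompl"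
| "op_sym OPlus = SPlus" | "op_sym OTimes = STimes" | "op_sym ODiv = SDiv"

fun lab_enc :: "glabel \<Rightarrow> esym list" where
  "lab_enc (Inp n) = bin n"
| "lab_enc (Gop \<sigma>) = [op_sym \<sigma>]"

definition gate_enc :: "circuit \<Rightarrow> nat \<Rightarrow> esym list" where
  "gate_enc C g =
     [SOpen] @ bin g @ [SComma] @ lab_enc (lab C g) @ [SComma, SOpen]
     @ concat (map (\<lambda>p. bin p @ [SComma]) (preds C g)) @ [SClose, SClose]"

text \<open>Gates are listed in some fixed order (the length is independent of the order,
  so reverse topological order gives the same length).\<close>
definition circ_enc :: "circuit \<Rightarrow> esym list" where
  "circ_enc C = [SOpen] @ concat (map (gate_enc C) (sorted_list_of_set (gates C))) @ [SClose]"

fun sym_bits :: "esym \<Rightarrow> bool list" where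
  "sym_bits S0 = [False, False, False, False]"
| "sym_bits S1 = [False, False, False, True]"
| "sym_bits SOpen = [False, False, True, False]"
| "sym_bits SClose = [False, False, True, True]"
| "sym_bits SComma = [False, True, False, False]"
| "sym_bits SUn = [False, True, False, True]"
| "sym_bits SInt = [False, True, True, False]"
| "sym_bits SCompl = [False, True, True, True]"
| "sym_bits SPlus = [True, False, False, False]"
| "sym_bits STimes = [True, False, False, True]"
| "sym_bits SDiv = [True, False, True, False]"

definition circ_bits :: "circuit \<Rightarrow> bool list" where
  "circ_bits C = concat (map sym_bits (circ_enc C))"

definition circ_size :: "circuit \<Rightarrow> nat" where
  "circ_size C = length (circ_bits C)"

end

theory Submission
  imports Defs
begin

declare bin.simps[simp del]

definition evc :: "nat \<Rightarrow> nat set \<Rightarrow> bool" where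
  "evc T S \<longleftrightarrow> (\<forall>z\<ge>T. (z \<in> S) = (T \<in> S))"

lemma evc_D: "evc T S \<Longrightarrow> T \<le> z \<Longrightarrow> (z \<in> S) = (T \<in> S)"
  unfolding evc_def by blast

lemma evc_ge: "evc T S \<Longrightarrow> T \<in> S \<Longrightarrow> T \<le> z \<Longrightarrow> z \<in> S"
  using evc_D by blast

lemma evc_lt: "evc T S \<Longrightarrow> T \<notin> S \<Longrightarrow> a \<in> S \<Longrightarrow> a < T"
  using evc_D by (metis not_less)

lemma evc_I: "(\<And>z. T \<le> z \<Longrightarrow> (z \<in> S) = (T \<in> S)) \<Longrightarrow> evc T S"
  unfolding evc_def by blast

lemma evc_mono: "evc T S \<Longrightarrow> T \<le> T' \<Longrightarrow> evc T' S"
  by (rule evc_I) (metis evc_D order_trans)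

lemma evc_compl: "evc T A \<Longrightarrow> evc T (UNIV - A)"
  by (rule evc_I) (metis evc_D Diff_iff UNIV_I)

lemma evc_un: "evc T A \<Longrightarrow> evc T B \<Longrightarrow> evc T (A \<union> B)"
  by (rule evc_I) (metis evc_D Un_iff)

lemma evc_int2: "evc T A \<Longrightarrow> evc T B \<Longrightarrow> evc T (A \<inter> B)"
  by (rule evc_I) (metis evc_D Int_iff)

lemma evc_all: "\<forall>z\<ge>T. z \<in> S \<Longrightarrow> evc T S"
  unfolding evc_def by blast

lemma evc_none: "\<forall>z\<ge>T. z \<notin> S \<Longrightarrow> evc T S"
  unfolding evc_def by blast

lemma evc_plus_aux:
  assumes A: "evc T A" and TA: "T \<in> A" and B: "evc T B"
  shows "evc (2*T) (set_plus_nat A B)"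
proof (cases "B = {}")
  case True
  then show ?thesis by (intro evc_none) (auto simp: set_plus_nat_def)
next
  case False
  then obtain b where b: "b \<in> B" by auto
  define b' where "b' = (if b < T then b else T)"
  have b'B: "b' \<in> B"
  proof (cases "b < T")
    case True then show ?thesis using b unfolding b'_def by simp
  next
    case False
    then have "T \<in> B" using evc_D[OF B, of b] b by simp
    then show ?thesis using False unfolding b'_def by simp
  qed
  have b'T: "b' \<le> T" unfolding b'_def by auto
  show ?thesis
  proof (intro evc_all allI impI)
    fix z :: nat assume z: "z \<ge> 2*T"
    have "z - b' \<in> A" using evc_ge[OF A TA] z b'T by simp
    moreover have "z = (z - b') + b'" using z b'T by auto
    ultimately show "z \<in> set_plus_nat A B" using b'B unfolding set_plus_nat_def by blast
  qed
qed

lemma set_plus_comm: "set_plus_nat A B = set_plus_nat B A"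
  unfolding set_plus_nat_def by (metis (mono_tags, lifting) add.commute)

lemma evc_plus:
  assumes A: "evc T A" and B: "evc T B"
  shows "evc (2*T) (set_plus_nat A B)"
proof -
  consider "T \<in> A" | "T \<in> B" | "T \<notin> A \<and> T \<notin> B" by blast
  then show ?thesis
  proof cases
    case 1 then show ?thesis using evc_plus_aux A B by blast
  next
    case 2 then show ?thesis using evc_plus_aux A B set_plus_comm by metis
  next
    case 3
    have a: "\<forall>a\<in>A. a < T" using evc_lt[OF A] 3 by blast
    have b: "\<forall>b\<in>B. b < T" using evc_lt[OF B] 3 by blast
    show ?thesis
    proof (intro evc_none allI impI)
      fix z :: nat assume "z \<ge> 2*T"
      then show "z \<notin> set_plus_nat A B" using a b unfolding set_plus_nat_def by fastforce
    qed
  qed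
qed

lemma evc_div:
  assumes A: "evc T A"
  shows "evc T (set_div_nat A B)"
proof (cases "T \<in> A")
  case True
  show ?thesis
  proof (cases "B - {0} = {}")
    case True
    then have "set_div_nat A B = {}" unfolding set_div_nat_def by blast
    then show ?thesis by (intro evc_none) simp
  next
    case False
    then obtain b where b: "b \<in> B" "b \<noteq> 0" by auto
    show ?thesis
    proof (intro evc_all allI impI)
      fix z :: nat assume z: "z \<ge> T"
      have "z \<le> z * b" using b(2) by simp
      then have "z * b \<ge> T" using z by linarith
      then have "z * b \<in> A" using evc_ge[OF A True] by blast
      then show "z \<in> set_div_nat A B" using b unfolding set_div_nat_def by blast
    qed
  qed
next
  case False
  have a: "\<forall>a\<in>A. a < T" using evc_lt[OF A False] by blast
  show ?thesis
  proof (intro evc_none allI impI)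
    fix z :: nat assume z: "z \<ge> T"
    show "z \<notin> set_div_nat A B"
    proof
      assume "z \<in> set_div_nat A B"
      then obtain a b where "a \<in> A" "b \<noteq> 0" "a = z * b" unfolding set_div_nat_def by blast
      then have "a \<ge> z" by simp
      moreover have "a < T" using a \<open>a \<in> A\<close> by blast
      ultimately show False using z by linarith
    qed
  qed
qed


lemma step:
  assumes circ: "is_circuit Ops C" and ops: "Ops \<subseteq> {OUn, OInt, OCompl, OPlus, ODiv}"
    and inv: "\<forall>g\<in>gates C. evc T (f g)"
    and inp: "\<forall>g\<in>gates C. \<forall>n. lab C g = Inp n \<longrightarrow> n < T"
    and g: "g \<in> gates C"
  shows "evc (2*T) (eval_step C f g)"
proof -
  have sub: "set (preds C g) \<subseteq> gates C" using circ g unfolding is_circuit_def by blast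
  have lb: "case lab C g of Inp n \<Rightarrow> preds C g = []
         | Gop \<sigma> \<Rightarrow> \<sigma> \<in> Ops \<and>
              (if \<sigma> = OCompl then length (preds C g) = 1 else length (preds C g) = 2)"
    using circ g unfolding is_circuit_def by blast
  show ?thesis
  proof (cases "lab C g")
    case (Inp n)
    then have "n < T" using inp g by blast
    then show ?thesis using Inp unfolding eval_step_def by (intro evc_none) auto
  next
    case (Gop \<sigma>)
    with lb have s: "\<sigma> \<in> Ops" and len: "if \<sigma> = OCompl then length (preds C g) = 1 else length (preds C g) = 2"
      by auto
    show ?thesis
    proof (cases "\<sigma> = OCompl")
      case True
      then have "length (preds C g) = 1" using len by simp
      then have "hd (preds C g) \<in> gates C" using sub by (cases "preds C g") auto
      then have "evc T (UNIV - f (hd (preds C g)))" using inv evc_compl by blast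
      then show ?thesis using Gop True unfolding eval_step_def by (auto intro: evc_mono)
    next
      case False
      then have l2: "length (preds C g) = 2" using len by simp
      define p0 where "p0 = preds C g ! 0"
      define p1 where "p1 = preds C g ! 1"
      have "p0 \<in> gates C" "p1 \<in> gates C" using sub l2 unfolding p0_def p1_def
        by (auto simp: subset_iff)
      then have A: "evc T (f (min p0 p1))" and B: "evc T (f (max p0 p1))"
        using inv by (auto simp: min_def max_def)
      have e: "eval_step C f g = apply_binop \<sigma> (f (min p0 p1)) (f (max p0 p1))"
        using Gop False unfolding eval_step_def p0_def p1_def by (simp add: Let_def)
      have "\<sigma> \<in> {OUn, OInt, OPlus, ODiv}" using s ops False by auto
      have TT: "T \<le> 2 * T" by simp
      have u: "evc (2*T) (f (min p0 p1) \<union> f (max p0 p1))" using evc_mono[OF evc_un[OF A B] TT] .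
      have i: "evc (2*T) (f (min p0 p1) \<inter> f (max p0 p1))" using evc_mono[OF evc_int2[OF A B] TT] .
      have d: "evc (2*T) (set_div_nat (f (min p0 p1)) (f (max p0 p1)))" using evc_mono[OF evc_div[OF A] TT] .
      have p: "evc (2*T) (set_plus_nat (f (min p0 p1)) (f (max p0 p1)))" using evc_plus[OF A B] .
      show ?thesis
        using \<open>\<sigma> \<in> {OUn, OInt, OPlus, ODiv}\<close> u i d p unfolding e by auto
    qed
  qed
qed

lemma iter:
  assumes circ: "is_circuit Ops C" and ops: "Ops \<subseteq> {OUn, OInt, OCompl, OPlus, ODiv}"
    and inp: "\<forall>g\<in>gates C. \<forall>n. lab C g = Inp n \<longrightarrow> n < M"
  shows "\<forall>g\<in>gates C. evc (2^k * M) ((eval_step C ^^ k) (\<lambda>_. {}) g)"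
proof (induction k)
  case 0
  then show ?case by (simp add: evc_def)
next
  case (Suc k)
  have inp': "\<forall>g\<in>gates C. \<forall>n. lab C g = Inp n \<longrightarrow> n < 2^k * M"
    using inp by (metis less_le_trans mult_le_mono1 mult_1 one_le_power one_le_numeral)
  show ?case
  proof
    fix g assume "g \<in> gates C"
    from step[OF circ ops Suc.IH inp' this] show "evc (2 ^ Suc k * M) ((eval_step C ^^ Suc k) (\<lambda>_. {}) g)"
      by (simp add: mult.assoc)
  qed
qed

lemma bin_len: "n < 2 ^ length (bin n)"
proof (induction n rule: bin.induct)
  case (1 n)
  show ?case
  proof (cases "n < 2")
    case True then show ?thesis by (subst bin.simps) simp
  next
    case False
    then have "n div 2 < 2 ^ length (bin (n div 2))" using 1 by simp
    moreover have "length (bin n) = Suc (length (bin (n div 2)))" using False by (subst bin.simps) simp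
    ultimately show ?thesis by simp
  qed
qed

lemma bits_len: "length (concat (map sym_bits xs)) \<ge> length xs"
proof (induction xs)
  case Nil then show ?case by simp
next
  case (Cons x xs)
  have "length (sym_bits x) \<ge> 1" by (cases x) auto
  then show ?case using Cons by simp
qed

lemma enc_len:
  assumes fin: "finite (gates C)" and g: "g \<in> gates C" and l: "lab C g = Inp n"
  shows "length (bin n) + card (gates C) \<le> length (circ_enc C)"
proof -
  let ?f = "\<lambda>x. length (gate_enc C x)"
  have pos: "\<And>x. ?f x \<ge> 1" unfolding gate_enc_def by simp
  have gl: "?f g \<ge> length (bin n) + 1" unfolding gate_enc_def using l by simp
  have "length (circ_enc C) = 2 + sum ?f (gates C)"
    unfolding circ_enc_def using fin
    by (simp add: length_concat sum_list_distinct_conv_sum_set comp_def)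
  also have "sum ?f (gates C) = ?f g + sum ?f (gates C - {g})"
    using fin g by (simp add: sum.remove)
  also have "sum ?f (gates C - {g}) \<ge> card (gates C - {g})"
    using sum_mono[of "gates C - {g}" "\<lambda>_. 1::nat" ?f] pos by simp
  moreover have "card (gates C - {g}) + 1 = card (gates C)"
    using fin g by (simp add: card_Diff_singleton) (metis Suc_pred card_gt_0_iff empty_iff)
  ultimately show ?thesis using gl by linarith
qed

theorem corollary1:
  fixes Ops :: "setop set" and C :: circuit and z :: nat
  assumes "Ops \<noteq> {}" and "Ops \<subseteq> {OUn, OInt, OCompl, OPlus, ODiv}"
    and "is_circuit Ops C"
    and "z \<ge> 2 ^ circ_size C + 1"
  shows "z \<in> circuit_val C \<longleftrightarrow> 2 ^ circ_size C + 1 \<in> circuit_val C"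
proof -
  let ?K = "length (circ_enc C)"
  let ?N = "card (gates C)"
  have fin: "finite (gates C)" and out: "outg C \<in> gates C"
    using assms(3) unfolding is_circuit_def by auto
  have NK: "?N \<le> ?K"
  proof -
    have "length (circ_enc C) = 2 + (\<Sum>x\<in>gates C. length (gate_enc C x))"
      unfolding circ_enc_def using fin
      by (simp add: length_concat sum_list_distinct_conv_sum_set comp_def)
    moreover have "(\<Sum>x\<in>gates C. length (gate_enc C x)) \<ge> (\<Sum>x\<in>gates C. 1)"
      by (rule sum_mono) (simp add: gate_enc_def)
    ultimately show ?thesis by simp
  qed
  have inp: "\<forall>g\<in>gates C. \<forall>n. lab C g = Inp n \<longrightarrow> n < 2 ^ (?K - ?N)"
  proof (intro ballI allI impI)
    fix g n assume "g \<in> gates C" "lab C g = Inp n"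
    then have "length (bin n) \<le> ?K - ?N" using enc_len[OF fin] by fastforce
    then show "n < 2 ^ (?K - ?N)"
      using bin_len[of n] by (meson less_le_trans one_le_numeral power_increasing)
  qed
  have "evc (2 ^ ?N * 2 ^ (?K - ?N)) (circuit_val C)"
    using iter[OF assms(3) assms(2) inp, of ?N] out
    unfolding circuit_val_def gate_val_def by blast
  moreover have "2 ^ ?N * 2 ^ (?K - ?N) = (2::nat) ^ ?K" using NK by (simp flip: power_add)
  ultimately have ev: "evc (2 ^ ?K) (circuit_val C)" by simp
  have "?K \<le> circ_size C" unfolding circ_size_def circ_bits_def by (rule bits_len)
  then have le: "(2::nat) ^ ?K \<le> 2 ^ circ_size C" by (simp add: power_increasing)
  have t1: "2 ^ ?K \<le> z" using le assms(4) by linarith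
  have t2: "2 ^ ?K \<le> 2 ^ circ_size C + (1::nat)" using le by linarith
  show ?thesis using evc_D[OF ev t1] evc_D[OF ev t2] by blast
qed

end
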